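(* Let $p\ge5$ be prime. Then the following graph $G_p$ has no induced regular subgraph of order $p$. (a) If $p=12t+1$, then $G_p=3t\,C_9[K_{6t}]$, which has $\frac98(p-1)^2$ vertices. (b) If $p=12t+5$, then $G_p=(3t+1)\,C_9[K_{6t+2}]$, which has $\frac98(p-1)^2$ vertices. (c) If $p=12t+7$, then $G_p=C_5[K_{6t+3}]\sqcup(3t+1)\,C_9[K_{6t+3}]$, which has $\frac18(p-1)(9p-7)$ vertices. (d) If $p=12t+11$, then $G_p=C_4[K_{6t+5}]\sqcup(3t+2)\,C_9[K_{6t+5}]$, which has $\frac18(p-1)(9p-11)$ vertices. (Here $t\ge0$ is an integer.)
   Context: Graphs are finite and simple; the order of a graph is its number of vertices. $C_r$ is the cycle on $r$ vertices and $K_s$ the complete graph on $s$ vertices. The lexicographic product $G[H]$ has vertex set $V(G)\times V(H)$, with $(a,b)$ adjacent to $(a',b')$ iff $a$ is adjacent to $a'$ in $G$, or $a=a'$ and $b$ is adjacent to $b'$ in $H$. For a graph $G$ and integer $m\ge0$, $mG$ denotes the disjoint union of $m$ copies of $G$, and $\sqcup$ denotes disjoint union. An induced regular subgraph is an induced subgraph in which all vertices have the same degree. *)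

theory Defs
  imports Main "HOL-Computational_Algebra.Primes"
begin

text \<open>A finite simple graph is represented by a vertex set together with a
symmetric, irreflexive adjacency relation (all constructions below produce such).\<close>
type_synonym 'a graph = "'a set \<times> ('a \<Rightarrow> 'a \<Rightarrow> bool)"

definition verts :: "'a graph \<Rightarrow> 'a set" where "verts G = fst G"
definition adj :: "'a graph \<Rightarrow> 'a \<Rightarrow> 'a \<Rightarrow> bool" where "adj G = snd G"

definition cycle_graph :: "nat \<Rightarrow> nat graph" where
  "cycle_graph r = ({0..<r}, \<lambda>i j. i \<noteq> j \<and> (j = (i + 1) mod r \<or> i = (j + 1) mod r))"

definition complete_graph :: "nat \<Rightarrow> nat graph" where
  "complete_graph s = ({0..<s}, \<lambda>i j. i \<noteq> j)"

definition lex_prod :: "'a graph \<Rightarrow> 'b graph \<Rightarrow> ('a \<times> 'b) graph" where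
  "lex_prod G H = (verts G \<times> verts H,
     \<lambda>(a, b) (a', b'). adj G a a' \<or> (a = a' \<and> adj H b b'))"

definition copies :: "nat \<Rightarrow> 'a graph \<Rightarrow> (nat \<times> 'a) graph" where
  "copies m G = ({0..<m} \<times> verts G, \<lambda>(i, x) (j, y). i = j \<and> adj G x y)"

definition disj_union :: "'a graph \<Rightarrow> 'b graph \<Rightarrow> ('a + 'b) graph" where
  "disj_union G H = (Inl ` verts G \<union> Inr ` verts H,
     \<lambda>u v. case (u, v) of
        (Inl x, Inl y) \<Rightarrow> adj G x y
      | (Inr x, Inr y) \<Rightarrow> adj H x y
      | _ \<Rightarrow> False)"

definition induced_regular :: "'a graph \<Rightarrow> 'a set \<Rightarrow> bool" where
  "induced_regular G S = (\<exists>k. \<forall>v\<in>S. card {u \<in> S. adj G v u} = k)"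

definition has_induced_regular_subgraph_of_order :: "'a graph \<Rightarrow> nat \<Rightarrow> bool" where
  "has_induced_regular_subgraph_of_order G n =
     (\<exists>S. S \<subseteq> verts G \<and> card S = n \<and> induced_regular G S)"

end

theory Submission
  imports Defs
begin


abbreviation L :: "nat \<Rightarrow> nat \<Rightarrow> (nat \<times> nat) graph" where
  "L r m \<equiv> lex_prod (cycle_graph r) (complete_graph m)"

lemma lex_adj: "adj (L r m) (j,b) (j',b') \<longleftrightarrow>
   (j \<noteq> j' \<and> (j' = Suc j mod r \<or> j = Suc j' mod r)) \<or> (j = j' \<and> b \<noteq> b')"
  by (simp add: lex_prod_def adj_def cycle_graph_def complete_graph_def)

lemma verts_lex: "verts (L r m) = {0..<r} \<times> {0..<m}"
  by (simp add: lex_prod_def verts_def cycle_graph_def complete_graph_def)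

lemma verts_copies: "verts (copies n H) = {0..<n} \<times> verts H"
  by (simp add: copies_def verts_def)

lemma adj_copies: "adj (copies n H) (i,x) (j,y) \<longleftrightarrow> i = j \<and> adj H x y"
  by (simp add: copies_def adj_def)

lemma verts_disj: "verts (disj_union G H) = Inl ` verts G \<union> Inr ` verts H"
  by (simp add: disj_union_def verts_def)

lemma adj_disj1: "adj (disj_union G H) (Inl x) (Inl y) = adj G x y"
  by (simp add: disj_union_def adj_def)
lemma adj_disj2: "adj (disj_union G H) (Inr x) (Inr y) = adj H x y"
  by (simp add: disj_union_def adj_def)
lemma adj_disj3: "adj (disj_union G H) (Inl x) (Inr y) = False"
  by (simp add: disj_union_def adj_def)
lemma adj_disj4: "adj (disj_union G H) (Inr x) (Inl y) = False"
  by (simp add: disj_union_def adj_def)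
lemmas adj_disj = adj_disj1 adj_disj2 adj_disj3 adj_disj4

lemma card_verts_disj:
  assumes "finite (verts G)" "finite (verts H)"
  shows "card (verts (disj_union G H)) = card (verts G) + card (verts H)"
proof -
  have "card (Inl ` verts G \<union> Inr ` verts H) = card (Inl ` verts G :: ('a+'b) set) + card (Inr ` verts H :: ('a+'b) set)"
    by (rule card_Un_disjoint) (use assms in auto)
  also have "\<dots> = card (verts G) + card (verts H)"
    by (simp add: card_image)
  finally show ?thesis by (simp add: verts_disj)
qed

lemma cyc_nb:
  assumes "3 \<le> r" "j < r" "j' < r"
  shows "(j \<noteq> j' \<and> (j' = Suc j mod r \<or> j = Suc j' mod r)) \<longleftrightarrow> (j' = Suc j mod r \<or> j' = (j+r-1) mod r)"
proof -
  have a: "Suc j mod r = (if Suc j = r then 0 else Suc j)" using assms by auto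
  have b: "(j+r-1) mod r = (if j = 0 then r - 1 else j - 1)"
  proof (cases "j = 0")
    case True then show ?thesis using assms by simp
  next
    case False
    then have "j + r - 1 = (j - 1) + r" by simp
    then have "(j+r-1) mod r = (j - 1) mod r" by simp
    then show ?thesis using False assms by simp
  qed
  have c: "Suc j' mod r = (if Suc j' = r then 0 else Suc j')" using assms by auto
  show ?thesis unfolding a b c using assms by auto
qed

lemma cyc_dist:
  assumes "3 \<le> r" "j < r"
  shows "Suc j mod r \<noteq> j" "(j+r-1) mod r \<noteq> j" "Suc j mod r \<noteq> (j+r-1) mod r" "(j+r-1) mod r < r" "Suc j mod r < r"
proof -
  have a: "Suc j mod r = (if Suc j = r then 0 else Suc j)" using assms by auto
  have b: "(j+r-1) mod r = (if j = 0 then r - 1 else j - 1)"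
  proof (cases "j = 0")
    case True then show ?thesis using assms by simp
  next
    case False
    then have "j + r - 1 = (j - 1) + r" by simp
    then have "(j+r-1) mod r = (j - 1) mod r" by simp
    then show ?thesis using False assms by simp
  qed
  show "Suc j mod r \<noteq> j" "(j+r-1) mod r \<noteq> j" "Suc j mod r \<noteq> (j+r-1) mod r" "(j+r-1) mod r < r" "Suc j mod r < r"
    unfolding a b using assms by auto
qed

lemma lex_deg:
  fixes T :: "(nat \<times> nat) set"
  assumes r3: "3 \<le> r" and T: "T \<subseteq> {0..<r} \<times> {0..<m}" and jb: "(j,b) \<in> T"
  shows "card {u\<in>T. adj (L r m) (j,b) u} =
    card {c. (Suc j mod r, c) \<in> T} + card {c. ((j+r-1) mod r, c) \<in> T} + card {c. (j,c) \<in> T} - 1"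
proof -
  define n where "n = Suc j mod r"
  define q where "q = (j+r-1) mod r"
  have j: "j < r" using T jb by auto
  note d = cyc_dist[OF r3 j, folded n_def q_def]
  have fin: "\<And>x. finite {c. (x,c) \<in> T}"
  proof -
    fix x
    have "{c. (x,c) \<in> T} \<subseteq> {0..<m}" using T by auto
    then show "finite {c. (x,c) \<in> T}" using finite_subset by blast
  qed
  have eq: "{u\<in>T. adj (L r m) (j,b) u} = Sigma {n, q} (\<lambda>x. {c. (x,c)\<in>T}) \<union> Pair j ` ({c. (j,c)\<in>T} - {b})"
  proof (rule set_eqI)
    fix u :: "nat \<times> nat"
    obtain j' b' where u: "u = (j',b')" by fastforce
    show "u \<in> {u\<in>T. adj (L r m) (j,b) u} \<longleftrightarrow> u \<in> Sigma {n, q} (\<lambda>x. {c. (x,c)\<in>T}) \<union> Pair j ` ({c. (j,c)\<in>T} - {b})"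
    proof (cases "u \<in> T")
      case True
      then have j': "j' < r" using T u by auto
      have e1: "u \<in> {u\<in>T. adj (L r m) (j,b) u} \<longleftrightarrow> (j \<noteq> j' \<and> (j' = Suc j mod r \<or> j = Suc j' mod r)) \<or> (j = j' \<and> b \<noteq> b')"
        using True unfolding u by (simp add: lex_adj)
      have e2: "u \<in> Sigma {n, q} (\<lambda>x. {c. (x,c)\<in>T}) \<union> Pair j ` ({c. (j,c)\<in>T} - {b}) \<longleftrightarrow> (j' = n \<or> j' = q) \<or> (j' = j \<and> b' \<noteq> b)"
        using True unfolding u by auto
      show ?thesis unfolding e1 e2 using cyc_nb[OF r3 j j'] d unfolding n_def q_def by auto
    next
      case False
      then show ?thesis using u by auto
    qed
  qed
  have c1: "card (Sigma {n, q} (\<lambda>x. {c. (x,c)\<in>T})) = card {c. (n, c) \<in> T} + card {c. (q, c) \<in> T}"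
    using d fin by simp
  have c2: "card (Pair j ` ({c. (j,c)\<in>T} - {b})) = card {c. (j,c) \<in> T} - 1"
  proof -
    have "card (Pair j ` ({c. (j,c)\<in>T} - {b})) = card ({c. (j,c)\<in>T} - {b})"
      by (rule card_image) (simp add: inj_on_def)
    also have "\<dots> = card {c. (j,c) \<in> T} - 1" using jb fin by (simp add: card_Diff_singleton)
    finally show ?thesis .
  qed
  have disj: "Sigma {n, q} (\<lambda>x. {c. (x,c)\<in>T}) \<inter> Pair j ` ({c. (j,c)\<in>T} - {b}) = {}"
    using d by auto
  have pos: "card {c. (j,c) \<in> T} \<ge> 1"
    using jb fin by (metis (mono_tags) One_nat_def Suc_leI card_gt_0_iff empty_iff mem_Collect_eq)
  have "card {u\<in>T. adj (L r m) (j,b) u} = card {c. (n, c) \<in> T} + card {c. (q, c) \<in> T} + (card {c. (j,c) \<in> T} - 1)"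
    unfolding eq using c1 c2 disj fin by (simp add: card_Un_disjoint)
  then show ?thesis using pos unfolding n_def q_def by simp
qed

lemma lex_reg:
  fixes T :: "(nat \<times> nat) set"
  assumes r3: "3 \<le> r" and T: "T \<subseteq> verts (L r m)"
    and reg: "\<forall>v\<in>T. card {u\<in>T. adj (L r m) v u} = k"
  shows "card T = (\<Sum>j<r. card {c. (j,c) \<in> T})"
    and "\<forall>j<r. card {c. (j,c) \<in> T} \<le> m"
    and "\<forall>j<r. card {c. (j,c) \<in> T} > 0 \<longrightarrow>
          card {c. ((j+r-1) mod r, c) \<in> T} + card {c. (j,c) \<in> T} + card {c. (Suc j mod r, c) \<in> T} = k + 1"
proof -
  have T': "T \<subseteq> {0..<r} \<times> {0..<m}" using T by (simp add: verts_lex)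
  have fin: "\<And>x. finite {c. (x,c) \<in> T}"
  proof -
    fix x
    have "{c. (x,c) \<in> T} \<subseteq> {0..<m}" using T' by auto
    then show "finite {c. (x,c) \<in> T}" using finite_subset by blast
  qed
  have "T = Sigma {..<r} (\<lambda>j. {c. (j,c) \<in> T})" using T' by auto
  then show "card T = (\<Sum>j<r. card {c. (j,c) \<in> T})"
    by (metis card_SigmaI fin finite_lessThan)
  show "\<forall>j<r. card {c. (j,c) \<in> T} \<le> m"
  proof (intro allI impI)
    fix j
    have "{c. (j,c) \<in> T} \<subseteq> {0..<m}" using T' by auto
    then show "card {c. (j,c) \<in> T} \<le> m" by (metis card_atLeastLessThan card_mono finite_atLeastLessThan diff_zero)
  qed
  show "\<forall>j<r. card {c. (j,c) \<in> T} > 0 \<longrightarrow>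
          card {c. ((j+r-1) mod r, c) \<in> T} + card {c. (j,c) \<in> T} + card {c. (Suc j mod r, c) \<in> T} = k + 1"
  proof (intro allI impI)
    fix j assume "j < r" "card {c. (j,c) \<in> T} > 0"
    then obtain b where b: "(j,b) \<in> T" by (metis card_gt_0_iff ex_in_conv mem_Collect_eq)
    have "card {u\<in>T. adj (L r m) (j,b) u} = k" using reg b by blast
    moreover have "card {c. (j,c) \<in> T} \<ge> 1" using b fin by (metis (mono_tags) One_nat_def Suc_leI card_gt_0_iff empty_iff mem_Collect_eq)
    ultimately show "card {c. ((j+r-1) mod r, c) \<in> T} + card {c. (j,c) \<in> T} + card {c. (Suc j mod r, c) \<in> T} = k + 1"
      using lex_deg[OF r3 T' b] by simp
  qed
qed



lemma copies_reg:
  assumes S: "S \<subseteq> verts (copies n H)" and reg: "\<forall>v\<in>S. card {u\<in>S. adj (copies n H) v u} = k"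
    and fH: "finite (verts H)"
  shows "card S = (\<Sum>i<n. card {x. (i,x) \<in> S})"
    and "\<And>i. {x. (i,x) \<in> S} \<subseteq> verts H"
    and "\<And>i. \<forall>x\<in>{x. (i,x) \<in> S}. card {y\<in>{x. (i,x) \<in> S}. adj H x y} = k"
proof -
  have S': "S \<subseteq> {0..<n} \<times> verts H" using S by (simp add: verts_copies)
  have fin: "\<And>i. finite {x. (i,x) \<in> S}"
  proof -
    fix i
    have "{x. (i,x) \<in> S} \<subseteq> verts H" using S' by auto
    then show "finite {x. (i,x) \<in> S}" using fH finite_subset by blast
  qed
  have "S = Sigma {..<n} (\<lambda>i. {x. (i,x) \<in> S})" using S' by auto
  then show "card S = (\<Sum>i<n. card {x. (i,x) \<in> S})"
    by (metis card_SigmaI fin finite_lessThan)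
  show "\<And>i. {x. (i,x) \<in> S} \<subseteq> verts H" using S' by auto
  show "\<And>i. \<forall>x\<in>{x. (i,x) \<in> S}. card {y\<in>{x. (i,x) \<in> S}. adj H x y} = k"
  proof
    fix i x assume x: "x \<in> {x. (i,x) \<in> S}"
    have "{u\<in>S. adj (copies n H) (i,x) u} = Pair i ` {y\<in>{x. (i,x) \<in> S}. adj H x y}"
      by (auto simp: adj_copies)
    moreover have "card (Pair i ` {y\<in>{x. (i,x) \<in> S}. adj H x y}) = card {y\<in>{x. (i,x) \<in> S}. adj H x y}"
      by (rule card_image) (simp add: inj_on_def)
    ultimately show "card {y\<in>{x. (i,x) \<in> S}. adj H x y} = k" using reg x by auto
  qed
qed

lemma disj_reg:
  assumes S: "S \<subseteq> verts (disj_union G H)" and reg: "\<forall>v\<in>S. card {u\<in>S. adj (disj_union G H) v u} = k"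
    and fG: "finite (verts G)" and fH: "finite (verts H)"
  shows "card S = card {x. Inl x \<in> S} + card {y. Inr y \<in> S}"
    and "{x. Inl x \<in> S} \<subseteq> verts G" and "{y. Inr y \<in> S} \<subseteq> verts H"
    and "\<forall>x\<in>{x. Inl x \<in> S}. card {y\<in>{x. Inl x \<in> S}. adj G x y} = k"
    and "\<forall>x\<in>{x. Inr x \<in> S}. card {y\<in>{x. Inr x \<in> S}. adj H x y} = k"
proof -
  have S': "S \<subseteq> Inl ` verts G \<union> Inr ` verts H" using S by (simp add: verts_disj)
  show sG: "{x. Inl x \<in> S} \<subseteq> verts G" and sH: "{y. Inr y \<in> S} \<subseteq> verts H" using S' by auto
  have f1: "finite {x. Inl x \<in> S}" using sG fG finite_subset by blast
  have f2: "finite {x. Inr x \<in> S}" using sH fH finite_subset by blast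
  have "S = Inl ` {x. Inl x \<in> S} \<union> Inr ` {y. Inr y \<in> S}" using S' by auto
  moreover have "card (Inl ` {x. Inl x \<in> S} \<union> Inr ` {y. Inr y \<in> S}) = card (Inl ` {x. Inl x \<in> S} :: ('a+'b) set) + card (Inr ` {y. Inr y \<in> S} :: ('a+'b) set)"
    using f1 f2 by (subst card_Un_disjoint) auto
  ultimately show "card S = card {x. Inl x \<in> S} + card {y. Inr y \<in> S}"
    by (simp add: card_image)
  show "\<forall>x\<in>{x. Inl x \<in> S}. card {y\<in>{x. Inl x \<in> S}. adj G x y} = k"
  proof
    fix x assume x: "x \<in> {x. Inl x \<in> S}"
    have "{u\<in>S. adj (disj_union G H) (Inl x) u} = Inl ` {y\<in>{x. Inl x \<in> S}. adj G x y}"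
      using S' by (auto simp: adj_disj)
    moreover have "card (Inl ` {y\<in>{x. Inl x \<in> S}. adj G x y} :: ('a + 'b) set) = card {y\<in>{x. Inl x \<in> S}. adj G x y}"
      by (rule card_image) (simp add: inj_on_def)
    ultimately show "card {y\<in>{x. Inl x \<in> S}. adj G x y} = k" using reg x by auto
  qed
  show "\<forall>x\<in>{x. Inr x \<in> S}. card {y\<in>{x. Inr x \<in> S}. adj H x y} = k"
  proof
    fix x assume x: "x \<in> {x. Inr x \<in> S}"
    have "{u\<in>S. adj (disj_union G H) (Inr x) u} = Inr ` {y\<in>{x. Inr x \<in> S}. adj H x y}"
      using S' by (auto simp: adj_disj)
    moreover have "card (Inr ` {y\<in>{x. Inr x \<in> S}. adj H x y} :: ('a + 'b) set) = card {y\<in>{x. Inr x \<in> S}. adj H x y}"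
      by (rule card_image) (simp add: inj_on_def)
    ultimately show "card {y\<in>{x. Inr x \<in> S}. adj H x y} = k" using reg x by auto
  qed
qed



lemma c9i:
  fixes x0 x1 x2 x3 x4 x5 x6 x7 x8 m d :: int
  assumes "x0 \<ge> 0" "x1 \<ge> 0" "x2 \<ge> 0" "x3 \<ge> 0" "x4 \<ge> 0" "x5 \<ge> 0" "x6 \<ge> 0" "x7 \<ge> 0" "x8 \<ge> 0"
  "x0 \<le> m" "x1 \<le> m" "x2 \<le> m" "x3 \<le> m" "x4 \<le> m" "x5 \<le> m" "x6 \<le> m" "x7 \<le> m" "x8 \<le> m"
  "x0 > 0 \<longrightarrow> x8 + x0 + x1 = d"
  "x1 > 0 \<longrightarrow> x0 + x1 + x2 = d"
  "x2 > 0 \<longrightarrow> x1 + x2 + x3 = d"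
  "x3 > 0 \<longrightarrow> x2 + x3 + x4 = d"
  "x4 > 0 \<longrightarrow> x3 + x4 + x5 = d"
  "x5 > 0 \<longrightarrow> x4 + x5 + x6 = d"
  "x6 > 0 \<longrightarrow> x5 + x6 + x7 = d"
  "x7 > 0 \<longrightarrow> x6 + x7 + x8 = d"
  "x8 > 0 \<longrightarrow> x7 + x8 + x0 = d"
  shows "x0+x1+x2+x3+x4+x5+x6+x7+x8 = 0 \<or> (x0+x1+x2+x3+x4+x5+x6+x7+x8 = d \<and> x0+x1+x2+x3+x4+x5+x6+x7+x8 \<le> 2*m) \<or> x0+x1+x2+x3+x4+x5+x6+x7+x8 = 2*d \<or> x0+x1+x2+x3+x4+x5+x6+x7+x8 = 3*d \<or> x0+x1+x2+x3+x4+x5+x6+x7+x8 = 4*d"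
  using assms by smt

lemma c5i:
  fixes x0 x1 x2 x3 x4 m d :: int
  assumes "x0 \<ge> 0" "x1 \<ge> 0" "x2 \<ge> 0" "x3 \<ge> 0" "x4 \<ge> 0" "x0 \<le> m" "x1 \<le> m" "x2 \<le> m" "x3 \<le> m" "x4 \<le> m"
  "x0 > 0 \<longrightarrow> x4 + x0 + x1 = d"
  "x1 > 0 \<longrightarrow> x0 + x1 + x2 = d"
  "x2 > 0 \<longrightarrow> x1 + x2 + x3 = d"
  "x3 > 0 \<longrightarrow> x2 + x3 + x4 = d"
  "x4 > 0 \<longrightarrow> x3 + x4 + x0 = d"
  shows "x0+x1+x2+x3+x4 = 0 \<or> (x0+x1+x2+x3+x4 = d \<and> x0+x1+x2+x3+x4 \<le> 2*m) \<or> x0+x1+x2+x3+x4 = 2*d \<or> (d = 3*x0 \<and> x0+x1+x2+x3+x4 = 5*x0)"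
  using assms by smt

lemma c4i:
  fixes x0 x1 x2 x3 m d :: int
  assumes "x0 \<ge> 0" "x1 \<ge> 0" "x2 \<ge> 0" "x3 \<ge> 0" "x0 \<le> m" "x1 \<le> m" "x2 \<le> m" "x3 \<le> m"
  "x0 > 0 \<longrightarrow> x3 + x0 + x1 = d"
  "x1 > 0 \<longrightarrow> x0 + x1 + x2 = d"
  "x2 > 0 \<longrightarrow> x1 + x2 + x3 = d"
  "x3 > 0 \<longrightarrow> x2 + x3 + x0 = d"
  shows "x0+x1+x2+x3 = 0 \<or> (x0+x1+x2+x3 = d \<and> x0+x1+x2+x3 \<le> 2*m) \<or> x0+x1+x2+x3 = 2*d \<or> (d = 3*x0 \<and> x0+x1+x2+x3 = 4*x0)"
  using assms by smt

lemma imp_int: "(a > 0 \<longrightarrow> x + a + y = (d::nat)) \<Longrightarrow> (int a > 0 \<longrightarrow> int x + int a + int y = int d)"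
  by auto

lemma comp9:
  assumes T: "T \<subseteq> verts (L 9 m)" and reg: "\<forall>v\<in>T. card {u\<in>T. adj (L 9 m) v u} = k"
  shows "card T = 0 \<or> (card T = k+1 \<and> k+1 \<le> 2*m) \<or> card T = 2*(k+1) \<or> card T = 3*(k+1) \<or> card T = 4*(k+1)"
proof -
  define A where "A j = card {c. (j,c) \<in> T}" for j
  have R1: "card T = (\<Sum>j<9. A j)" and R2: "\<forall>j<9. A j \<le> m"
    and R3: "\<forall>j<9. A j > 0 \<longrightarrow> A ((j+9-1) mod 9) + A j + A (Suc j mod 9) = k + 1"
    using lex_reg[of 9 T m k, OF _ T reg] unfolding A_def by simp_all
  have s: "card T = A 0 + A 1 + A 2 + A 3 + A 4 + A 5 + A 6 + A 7 + A 8"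
    using R1 by (simp add: eval_nat_numeral)
  have b: "A 0 \<le> m" "A 1 \<le> m" "A 2 \<le> m" "A 3 \<le> m" "A 4 \<le> m" "A 5 \<le> m" "A 6 \<le> m" "A 7 \<le> m" "A 8 \<le> m"
    using R2 by simp_all
  have h: "A 0 > 0 \<longrightarrow> A 8 + A 0 + A 1 = k+1"
    "A 1 > 0 \<longrightarrow> A 0 + A 1 + A 2 = k+1"
    "A 2 > 0 \<longrightarrow> A 1 + A 2 + A 3 = k+1"
    "A 3 > 0 \<longrightarrow> A 2 + A 3 + A 4 = k+1"
    "A 4 > 0 \<longrightarrow> A 3 + A 4 + A 5 = k+1"
    "A 5 > 0 \<longrightarrow> A 4 + A 5 + A 6 = k+1"
    "A 6 > 0 \<longrightarrow> A 5 + A 6 + A 7 = k+1"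
    "A 7 > 0 \<longrightarrow> A 6 + A 7 + A 8 = k+1"
    "A 8 > 0 \<longrightarrow> A 7 + A 8 + A 0 = k+1"
    using spec[OF R3, of 0] spec[OF R3, of 1] spec[OF R3, of 2] spec[OF R3, of 3] spec[OF R3, of 4]
      spec[OF R3, of 5] spec[OF R3, of 6] spec[OF R3, of 7] spec[OF R3, of 8] by (simp_all add: numeral_2_eq_2)
  have "int (A 0)+int (A 1)+int (A 2)+int (A 3)+int (A 4)+int (A 5)+int (A 6)+int (A 7)+int (A 8) = 0 \<or>
    (int (A 0)+int (A 1)+int (A 2)+int (A 3)+int (A 4)+int (A 5)+int (A 6)+int (A 7)+int (A 8) = int (k+1) \<and>
     int (A 0)+int (A 1)+int (A 2)+int (A 3)+int (A 4)+int (A 5)+int (A 6)+int (A 7)+int (A 8) \<le> 2*int m) \<or>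
    int (A 0)+int (A 1)+int (A 2)+int (A 3)+int (A 4)+int (A 5)+int (A 6)+int (A 7)+int (A 8) = 2*int (k+1) \<or>
    int (A 0)+int (A 1)+int (A 2)+int (A 3)+int (A 4)+int (A 5)+int (A 6)+int (A 7)+int (A 8) = 3*int (k+1) \<or>
    int (A 0)+int (A 1)+int (A 2)+int (A 3)+int (A 4)+int (A 5)+int (A 6)+int (A 7)+int (A 8) = 4*int (k+1)"
    apply (rule c9i)
    apply (simp_all only: of_nat_0_le_iff of_nat_le_iff b)
    by (rule imp_int, rule h)+
  then show ?thesis unfolding s by linarith
qed

lemma comp5:
  assumes T: "T \<subseteq> verts (L 5 m)" and reg: "\<forall>v\<in>T. card {u\<in>T. adj (L 5 m) v u} = k"
  shows "card T = 0 \<or> (card T = k+1 \<and> k+1 \<le> 2*m) \<or> card T = 2*(k+1) \<or> (\<exists>a. k+1 = 3*a \<and> card T = 5*a)"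
proof -
  define A where "A j = card {c. (j,c) \<in> T}" for j
  have R1: "card T = (\<Sum>j<5. A j)" and R2: "\<forall>j<5. A j \<le> m"
    and R3: "\<forall>j<5. A j > 0 \<longrightarrow> A ((j+5-1) mod 5) + A j + A (Suc j mod 5) = k + 1"
    using lex_reg[of 5 T m k, OF _ T reg] unfolding A_def by simp_all
  have s: "card T = A 0 + A 1 + A 2 + A 3 + A 4"
    using R1 by (simp add: eval_nat_numeral)
  have b: "A 0 \<le> m" "A 1 \<le> m" "A 2 \<le> m" "A 3 \<le> m" "A 4 \<le> m"
    using R2 by simp_all
  have h: "A 0 > 0 \<longrightarrow> A 4 + A 0 + A 1 = k+1"
    "A 1 > 0 \<longrightarrow> A 0 + A 1 + A 2 = k+1"
    "A 2 > 0 \<longrightarrow> A 1 + A 2 + A 3 = k+1"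
    "A 3 > 0 \<longrightarrow> A 2 + A 3 + A 4 = k+1"
    "A 4 > 0 \<longrightarrow> A 3 + A 4 + A 0 = k+1"
    using spec[OF R3, of 0] spec[OF R3, of 1] spec[OF R3, of 2] spec[OF R3, of 3] spec[OF R3, of 4]
    by (simp_all add: numeral_2_eq_2)
  have "int (A 0)+int (A 1)+int (A 2)+int (A 3)+int (A 4) = 0 \<or>
    (int (A 0)+int (A 1)+int (A 2)+int (A 3)+int (A 4) = int (k+1) \<and>
     int (A 0)+int (A 1)+int (A 2)+int (A 3)+int (A 4) \<le> 2*int m) \<or>
    int (A 0)+int (A 1)+int (A 2)+int (A 3)+int (A 4) = 2*int (k+1) \<or>
    (int (k+1) = 3 * int (A 0) \<and> int (A 0)+int (A 1)+int (A 2)+int (A 3)+int (A 4) = 5*int (A 0))"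
    apply (rule c5i)
    apply (simp_all only: of_nat_0_le_iff of_nat_le_iff b)
    by (rule imp_int, rule h)+
  then have "card T = 0 \<or> (card T = k+1 \<and> k+1 \<le> 2*m) \<or> card T = 2*(k+1) \<or> (k+1 = 3*A 0 \<and> card T = 5*A 0)"
    unfolding s by linarith
  then show ?thesis by blast
qed

lemma comp4:
  assumes T: "T \<subseteq> verts (L 4 m)" and reg: "\<forall>v\<in>T. card {u\<in>T. adj (L 4 m) v u} = k"
  shows "card T = 0 \<or> (card T = k+1 \<and> k+1 \<le> 2*m) \<or> card T = 2*(k+1) \<or> (\<exists>a. k+1 = 3*a \<and> card T = 4*a)"
proof -
  define A where "A j = card {c. (j,c) \<in> T}" for j
  have R1: "card T = (\<Sum>j<4. A j)" and R2: "\<forall>j<4. A j \<le> m"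
    and R3: "\<forall>j<4. A j > 0 \<longrightarrow> A ((j+4-1) mod 4) + A j + A (Suc j mod 4) = k + 1"
    using lex_reg[of 4 T m k, OF _ T reg] unfolding A_def by simp_all
  have s: "card T = A 0 + A 1 + A 2 + A 3"
    using R1 by (simp add: eval_nat_numeral)
  have b: "A 0 \<le> m" "A 1 \<le> m" "A 2 \<le> m" "A 3 \<le> m"
    using R2 by simp_all
  have h: "A 0 > 0 \<longrightarrow> A 3 + A 0 + A 1 = k+1"
    "A 1 > 0 \<longrightarrow> A 0 + A 1 + A 2 = k+1"
    "A 2 > 0 \<longrightarrow> A 1 + A 2 + A 3 = k+1"
    "A 3 > 0 \<longrightarrow> A 2 + A 3 + A 0 = k+1"
  proof -
    have m4: "(0+4-1) mod 4 = (3::nat)" "Suc 0 mod 4 = (1::nat)" "(1+4-1) mod 4 = (0::nat)" "Suc 1 mod 4 = (2::nat)"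
      "(2+4-1) mod 4 = (1::nat)" "Suc 2 mod 4 = (3::nat)" "(3+4-1) mod 4 = (2::nat)" "Suc 3 mod 4 = (0::nat)"
      by simp_all
    have lt: "(0::nat) < 4" "(1::nat) < 4" "(2::nat) < 4" "(3::nat) < 4" by simp_all
    show "A 0 > 0 \<longrightarrow> A 3 + A 0 + A 1 = k+1"
      using spec[OF R3, of 0] lt unfolding m4 by blast
    show "A 1 > 0 \<longrightarrow> A 0 + A 1 + A 2 = k+1"
      using spec[OF R3, of 1] lt unfolding m4 by blast
    show "A 2 > 0 \<longrightarrow> A 1 + A 2 + A 3 = k+1"
      using spec[OF R3, of 2] lt unfolding m4 by blast
    show "A 3 > 0 \<longrightarrow> A 2 + A 3 + A 0 = k+1"
      using spec[OF R3, of 3] lt unfolding m4 by blast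
  qed
  have "int (A 0)+int (A 1)+int (A 2)+int (A 3) = 0 \<or>
    (int (A 0)+int (A 1)+int (A 2)+int (A 3) = int (k+1) \<and>
     int (A 0)+int (A 1)+int (A 2)+int (A 3) \<le> 2*int m) \<or>
    int (A 0)+int (A 1)+int (A 2)+int (A 3) = 2*int (k+1) \<or>
    (int (k+1) = 3 * int (A 0) \<and> int (A 0)+int (A 1)+int (A 2)+int (A 3) = 4*int (A 0))"
    apply (rule c4i)
    apply (simp_all only: of_nat_0_le_iff of_nat_le_iff b)
    by (rule imp_int, rule h)+
  then have "card T = 0 \<or> (card T = k+1 \<and> k+1 \<le> 2*m) \<or> card T = 2*(k+1) \<or> (k+1 = 3*A 0 \<and> card T = 4*A 0)"
    unfolding s by linarith
  then show ?thesis by blast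
qed



lemma sum_mult:
  fixes \<sigma> :: "nat \<Rightarrow> nat"
  assumes "finite I" "\<forall>i\<in>I. \<sigma> i = 0 \<or> \<sigma> i = d \<or> \<sigma> i = 2*d \<or> \<sigma> i = 3*d \<or> \<sigma> i = 4*d"
  shows "\<exists>N. sum \<sigma> I = N*d \<and> N \<le> 4*card I"
  using assms
proof (induction I rule: finite_induct)
  case empty
  show ?case by simp
next
  case (insert x F)
  then obtain N where N: "sum \<sigma> F = N*d" "N \<le> 4*card F" by auto
  have hx: "\<sigma> x = 0 \<or> \<sigma> x = d \<or> \<sigma> x = 2*d \<or> \<sigma> x = 3*d \<or> \<sigma> x = 4*d" using insert.prems by blast
  have "\<exists>c::nat. c \<le> 4 \<and> \<sigma> x = c*d"
    using hx
  proof (elim disjE)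
    assume "\<sigma> x = 0" then show ?thesis by (intro exI[of _ 0]) simp
  next
    assume "\<sigma> x = d" then show ?thesis by (intro exI[of _ 1]) simp
  next
    assume "\<sigma> x = 2*d" then show ?thesis by (intro exI[of _ 2]) simp
  next
    assume "\<sigma> x = 3*d" then show ?thesis by (intro exI[of _ 3]) simp
  next
    assume "\<sigma> x = 4*d" then show ?thesis by (intro exI[of _ 4]) simp
  qed
  then obtain c where c: "c \<le> 4" "\<sigma> x = c*d" by blast
  have "sum \<sigma> (insert x F) = (c+N)*d" using insert.hyps N c by (simp add: algebra_simps)
  moreover have "c + N \<le> 4*card (insert x F)" using insert.hyps N c by simp
  ultimately show ?case by blast
qed

lemma arith_mult:
  fixes p d B e M N :: nat and \<sigma> :: "nat \<Rightarrow> nat" and I :: "nat set"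
  assumes pr: "prime p" and fI: "finite I" and ps: "p = M*d + sum \<sigma> I"
    and N: "sum \<sigma> I = N*d" "N \<le> 4*card I"
    and hs: "\<forall>i\<in>I. \<sigma> i = 0 \<or> (\<sigma> i = d \<and> d \<le> B) \<or> \<sigma> i = 2*d \<or> \<sigma> i = 3*d \<or> \<sigma> i = 4*d"
    and M: "M \<le> e" "M = 1 \<longrightarrow> d \<le> B"
    and Bp: "B < p" and Np: "4*card I + e < p"
  shows False
proof -
  have p1: "1 < p" and pd: "\<And>m. m dvd p \<Longrightarrow> m = 1 \<or> m = p" using pr prime_nat_iff by auto
  have pMN: "p = (M+N)*d" using ps N by (simp add: algebra_simps)
  then have "d dvd p" by simp
  then have "d = 1 \<or> d = p" using pd by blast
  then show False
  proof
    assume "d = 1"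
    then have "p = M + N" using pMN by simp
    then show False using M N Np by linarith
  next
    assume dp: "d = p"
    have "(M + N) * p = 1 * p" using pMN[unfolded dp] by linarith
    then have "M + N = 1" using p1 by (subst (asm) mult_right_cancel) auto
    then consider "M = 1" | "M = 0" "N = 1" by linarith
    then show False
    proof cases
      case 1 then show False using M Bp dp by simp
    next
      case 2
      then have sd: "sum \<sigma> I = d" using N by simp
      then have "sum \<sigma> I > 0" using dp p1 by simp
      have "\<not> (\<forall>i\<in>I. \<sigma> i = 0)"
      proof
        assume "\<forall>i\<in>I. \<sigma> i = 0"
        then have "sum \<sigma> I = 0" by simp
        then show False using \<open>sum \<sigma> I > 0\<close> by simp
      qed
      then obtain i where i: "i \<in> I" "\<sigma> i > 0" by auto
      have "\<sigma> i \<le> sum \<sigma> I" using i fI by (simp add: member_le_sum)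
      then have "\<sigma> i \<le> d" using sd by simp
      moreover have "d > 0" using dp p1 by simp
      ultimately have "\<sigma> i = d \<and> d \<le> B" using hs i by auto
      then show False using Bp dp by simp
    qed
  qed
qed

lemma arith_main:
  fixes p d B c e s0 :: nat and \<sigma> :: "nat \<Rightarrow> nat" and I :: "nat set"
  assumes pr: "prime p" and fI: "finite I" and ps: "p = s0 + sum \<sigma> I"
    and hs: "\<forall>i\<in>I. \<sigma> i = 0 \<or> (\<sigma> i = d \<and> d \<le> B) \<or> \<sigma> i = 2*d \<or> \<sigma> i = 3*d \<or> \<sigma> i = 4*d"
    and h0: "s0 = 0 \<or> (s0 = d \<and> d \<le> B \<and> 1 \<le> e) \<or> (s0 = 2*d \<and> 2 \<le> e) \<or> (\<exists>a. d = 3*a \<and> s0 = c*a)"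
    and Bp: "B < p" and Np: "4*card I + e < p" and c2: "2 \<le> c" and cm: "p mod 3 \<noteq> c mod 3"
  shows False
proof -
  have hs': "\<forall>i\<in>I. \<sigma> i = 0 \<or> \<sigma> i = d \<or> \<sigma> i = 2*d \<or> \<sigma> i = 3*d \<or> \<sigma> i = 4*d" using hs by blast
  obtain N where N: "sum \<sigma> I = N*d" "N \<le> 4*card I" using sum_mult[OF fI hs'] by blast
  have p1: "1 < p" and pd: "\<And>m. m dvd p \<Longrightarrow> m = 1 \<or> m = p" using pr prime_nat_iff by auto
  from h0 consider (z) "s0 = 0" | (o) "s0 = d" "d \<le> B" "1 \<le> e" | (t) "s0 = 2*d" "2 \<le> e"
    | (f) a where "d = 3*a" "s0 = c*a" by blast
  then show False
  proof cases
    case z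
    show False by (rule arith_mult[OF pr fI _ N hs, of 0 e]) (use ps z Bp Np in auto)
  next
    case o
    show False by (rule arith_mult[OF pr fI _ N hs, of 1 e]) (use ps o Bp Np in auto)
  next
    case t
    show False by (rule arith_mult[OF pr fI _ N hs, of 2 e]) (use ps t Bp Np in auto)
  next
    case f
    have pa: "p = a*(c + 3*N)" using ps N f by (simp add: algebra_simps)
    then have "a dvd p" by simp
    then have "a = 1 \<or> a = p" using pd by blast
    then show False
    proof
      assume "a = 1"
      then have "p = c + 3*N" using pa by simp
      then show False using cm by simp
    next
      assume "a = p"
      then have "p * 1 = p * (c + 3*N)" using pa by simp
      then have "c + 3*N = 1" using p1 by (subst (asm) mult_left_cancel) auto
      then show False using c2 by simp
    qed
  qed
qed



lemma case_a:
  assumes pr: "prime p" and pt: "p = 12*t + 1"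
  shows "let G = copies (3*t) (lex_prod (cycle_graph 9) (complete_graph (6*t))) in
        \<not> has_induced_regular_subgraph_of_order G p \<and>
        8 * card (verts G) = 9 * (p - 1)^2"
  unfolding Let_def
proof
  show "\<not> has_induced_regular_subgraph_of_order (copies (3*t) (L 9 (6*t))) p"
  proof
    assume "has_induced_regular_subgraph_of_order (copies (3*t) (L 9 (6*t))) p"
    then obtain S k where S: "S \<subseteq> verts (copies (3*t) (L 9 (6*t)))" "card S = p"
      and reg: "\<forall>v\<in>S. card {u\<in>S. adj (copies (3*t) (L 9 (6*t))) v u} = k"
      unfolding has_induced_regular_subgraph_of_order_def induced_regular_def by blast
    have fH: "finite (verts (L 9 (6*t)))" by (simp add: verts_lex)
    note C = copies_reg[OF S(1) reg fH]
    have hs: "\<forall>i\<in>{..<3*t}. card {x. (i,x)\<in>S} = 0 \<or> (card {x. (i,x)\<in>S} = k+1 \<and> k+1 \<le> 2*(6*t))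
       \<or> card {x. (i,x)\<in>S} = 2*(k+1) \<or> card {x. (i,x)\<in>S} = 3*(k+1) \<or> card {x. (i,x)\<in>S} = 4*(k+1)"
      using comp9[OF C(2) C(3)] by blast
    have ps: "p = 0 + (\<Sum>i<3*t. card {x. (i,x)\<in>S})"
      using C(1) S(2) by simp
    have h0: "(0::nat) = 0 \<or> (0 = k+1 \<and> k+1 \<le> 2*(6*t) \<and> 1 \<le> (0::nat))
       \<or> (0 = 2*(k+1) \<and> 2 \<le> (0::nat)) \<or> (\<exists>a. k+1 = 3*a \<and> 0 = 5*a)" by simp
    have Bp: "2*(6*t) < p" using pt by simp
    have Np: "4*card {..<3*t} + 0 < p" using pt by simp
    have c2: "2 \<le> (5::nat)" by simp
    have cm: "p mod 3 \<noteq> 5 mod 3" using pt by presburger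
    show False
      by (rule arith_main[OF pr finite_lessThan ps hs h0 Bp Np c2 cm])
  qed
  show "8 * card (verts (copies (3*t) (L 9 (6*t)))) = 9 * (p - 1)^2"
    using pt by (simp add: verts_copies verts_lex card_cartesian_product power2_eq_square algebra_simps)
qed

lemma case_b:
  assumes pr: "prime p" and pt: "p = 12*t + 5"
  shows "let G = copies (3*t+1) (lex_prod (cycle_graph 9) (complete_graph (6*t+2))) in
        \<not> has_induced_regular_subgraph_of_order G p \<and>
        8 * card (verts G) = 9 * (p - 1)^2"
  unfolding Let_def
proof
  show "\<not> has_induced_regular_subgraph_of_order (copies (3*t+1) (L 9 (6*t+2))) p"
  proof
    assume "has_induced_regular_subgraph_of_order (copies (3*t+1) (L 9 (6*t+2))) p"
    then obtain S k where S: "S \<subseteq> verts (copies (3*t+1) (L 9 (6*t+2)))" "card S = p"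
      and reg: "\<forall>v\<in>S. card {u\<in>S. adj (copies (3*t+1) (L 9 (6*t+2))) v u} = k"
      unfolding has_induced_regular_subgraph_of_order_def induced_regular_def by blast
    have fH: "finite (verts (L 9 (6*t+2)))" by (simp add: verts_lex)
    note C = copies_reg[OF S(1) reg fH]
    have hs: "\<forall>i\<in>{..<3*t+1}. card {x. (i,x)\<in>S} = 0 \<or> (card {x. (i,x)\<in>S} = k+1 \<and> k+1 \<le> 2*(6*t+2))
       \<or> card {x. (i,x)\<in>S} = 2*(k+1) \<or> card {x. (i,x)\<in>S} = 3*(k+1) \<or> card {x. (i,x)\<in>S} = 4*(k+1)"
      using comp9[OF C(2) C(3)] by blast
    have ps: "p = 0 + (\<Sum>i<3*t+1. card {x. (i,x)\<in>S})"
      using C(1) S(2) by simp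
    have h0: "(0::nat) = 0 \<or> (0 = k+1 \<and> k+1 \<le> 2*(6*t+2) \<and> 1 \<le> (0::nat))
       \<or> (0 = 2*(k+1) \<and> 2 \<le> (0::nat)) \<or> (\<exists>a. k+1 = 3*a \<and> 0 = 4*a)" by simp
    have Bp: "2*(6*t+2) < p" using pt by simp
    have Np: "4*card {..<3*t+1} + 0 < p" using pt by simp
    have c2: "2 \<le> (4::nat)" by simp
    have cm: "p mod 3 \<noteq> 4 mod 3" using pt by presburger
    show False
      by (rule arith_main[OF pr finite_lessThan ps hs h0 Bp Np c2 cm])
  qed
  show "8 * card (verts (copies (3*t+1) (L 9 (6*t+2)))) = 9 * (p - 1)^2"
    using pt by (simp add: verts_copies verts_lex card_cartesian_product power2_eq_square algebra_simps)
qed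

lemma case_c:
  assumes pr: "prime p" and pt: "p = 12*t + 7"
  shows "let G = disj_union (lex_prod (cycle_graph 5) (complete_graph (6*t+3)))
                 (copies (3*t+1) (lex_prod (cycle_graph 9) (complete_graph (6*t+3)))) in
        \<not> has_induced_regular_subgraph_of_order G p \<and>
        8 * card (verts G) = (p - 1) * (9*p - 7)"
  unfolding Let_def
proof
  have fL: "finite (verts (L 5 (6*t+3)))" by (simp add: verts_lex)
  have fH: "finite (verts (L 9 (6*t+3)))" by (simp add: verts_lex)
  have fR: "finite (verts (copies (3*t+1) (L 9 (6*t+3))))" by (simp add: verts_lex verts_copies)
  show "\<not> has_induced_regular_subgraph_of_order (disj_union (L 5 (6*t+3)) (copies (3*t+1) (L 9 (6*t+3)))) p"
  proof
    assume "has_induced_regular_subgraph_of_order (disj_union (L 5 (6*t+3)) (copies (3*t+1) (L 9 (6*t+3)))) p"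
    then obtain S k where S: "S \<subseteq> verts (disj_union (L 5 (6*t+3)) (copies (3*t+1) (L 9 (6*t+3))))" "card S = p"
      and reg: "\<forall>v\<in>S. card {u\<in>S. adj (disj_union (L 5 (6*t+3)) (copies (3*t+1) (L 9 (6*t+3)))) v u} = k"
      unfolding has_induced_regular_subgraph_of_order_def induced_regular_def by blast
    note D = disj_reg[OF S(1) reg fL fR]
    note C = copies_reg[OF D(3) D(5) fH]
    have hs: "\<forall>i\<in>{..<3*t+1}. card {x. (i,x)\<in>{y. Inr y \<in> S}} = 0 \<or> (card {x. (i,x)\<in>{y. Inr y \<in> S}} = k+1 \<and> k+1 \<le> 2*(6*t+3))
       \<or> card {x. (i,x)\<in>{y. Inr y \<in> S}} = 2*(k+1) \<or> card {x. (i,x)\<in>{y. Inr y \<in> S}} = 3*(k+1) \<or> card {x. (i,x)\<in>{y. Inr y \<in> S}} = 4*(k+1)"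
      using comp9[OF C(2) C(3)] by blast
    have h0: "card {x. Inl x \<in> S} = 0 \<or> (card {x. Inl x \<in> S} = k+1 \<and> k+1 \<le> 2*(6*t+3) \<and> 1 \<le> (2::nat))
       \<or> (card {x. Inl x \<in> S} = 2*(k+1) \<and> 2 \<le> (2::nat)) \<or> (\<exists>a. k+1 = 3*a \<and> card {x. Inl x \<in> S} = 5*a)"
      using comp5[OF D(2) D(4)] by auto
    have ps: "p = card {x. Inl x \<in> S} + (\<Sum>i<3*t+1. card {x. (i,x)\<in>{y. Inr y \<in> S}})"
      using C(1) D(1) S(2) by simp
    have Bp: "2*(6*t+3) < p" using pt by simp
    have Np: "4*card {..<3*t+1} + 2 < p" using pt by simp
    have c2: "2 \<le> (5::nat)" by simp
    have cm: "p mod 3 \<noteq> 5 mod 3" using pt by presburger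
    show False
      by (rule arith_main[OF pr finite_lessThan ps hs h0 Bp Np c2 cm])
  qed
  show "8 * card (verts (disj_union (L 5 (6*t+3)) (copies (3*t+1) (L 9 (6*t+3))))) = (p - 1) * (9*p - 7)"
    using pt fL fR by (simp add: card_verts_disj verts_copies verts_lex card_cartesian_product algebra_simps)
qed

lemma case_d:
  assumes pr: "prime p" and pt: "p = 12*t + 11"
  shows "let G = disj_union (lex_prod (cycle_graph 4) (complete_graph (6*t+5)))
                 (copies (3*t+2) (lex_prod (cycle_graph 9) (complete_graph (6*t+5)))) in
        \<not> has_induced_regular_subgraph_of_order G p \<and>
        8 * card (verts G) = (p - 1) * (9*p - 11)"
  unfolding Let_def
proof
  have fL: "finite (verts (L 4 (6*t+5)))" by (simp add: verts_lex)
  have fH: "finite (verts (L 9 (6*t+5)))" by (simp add: verts_lex)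
  have fR: "finite (verts (copies (3*t+2) (L 9 (6*t+5))))" by (simp add: verts_lex verts_copies)
  show "\<not> has_induced_regular_subgraph_of_order (disj_union (L 4 (6*t+5)) (copies (3*t+2) (L 9 (6*t+5)))) p"
  proof
    assume "has_induced_regular_subgraph_of_order (disj_union (L 4 (6*t+5)) (copies (3*t+2) (L 9 (6*t+5)))) p"
    then obtain S k where S: "S \<subseteq> verts (disj_union (L 4 (6*t+5)) (copies (3*t+2) (L 9 (6*t+5))))" "card S = p"
      and reg: "\<forall>v\<in>S. card {u\<in>S. adj (disj_union (L 4 (6*t+5)) (copies (3*t+2) (L 9 (6*t+5)))) v u} = k"
      unfolding has_induced_regular_subgraph_of_order_def induced_regular_def by blast
    note D = disj_reg[OF S(1) reg fL fR]
    note C = copies_reg[OF D(3) D(5) fH]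
    have hs: "\<forall>i\<in>{..<3*t+2}. card {x. (i,x)\<in>{y. Inr y \<in> S}} = 0 \<or> (card {x. (i,x)\<in>{y. Inr y \<in> S}} = k+1 \<and> k+1 \<le> 2*(6*t+5))
       \<or> card {x. (i,x)\<in>{y. Inr y \<in> S}} = 2*(k+1) \<or> card {x. (i,x)\<in>{y. Inr y \<in> S}} = 3*(k+1) \<or> card {x. (i,x)\<in>{y. Inr y \<in> S}} = 4*(k+1)"
      using comp9[OF C(2) C(3)] by blast
    have h0: "card {x. Inl x \<in> S} = 0 \<or> (card {x. Inl x \<in> S} = k+1 \<and> k+1 \<le> 2*(6*t+5) \<and> 1 \<le> (2::nat))
       \<or> (card {x. Inl x \<in> S} = 2*(k+1) \<and> 2 \<le> (2::nat)) \<or> (\<exists>a. k+1 = 3*a \<and> card {x. Inl x \<in> S} = 4*a)"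
      using comp4[OF D(2) D(4)] by auto
    have ps: "p = card {x. Inl x \<in> S} + (\<Sum>i<3*t+2. card {x. (i,x)\<in>{y. Inr y \<in> S}})"
      using C(1) D(1) S(2) by simp
    have Bp: "2*(6*t+5) < p" using pt by simp
    have Np: "4*card {..<3*t+2} + 2 < p" using pt by simp
    have c2: "2 \<le> (4::nat)" by simp
    have cm: "p mod 3 \<noteq> 4 mod 3" using pt by presburger
    show False
      by (rule arith_main[OF pr finite_lessThan ps hs h0 Bp Np c2 cm])
  qed
  show "8 * card (verts (disj_union (L 4 (6*t+5)) (copies (3*t+2) (L 9 (6*t+5))))) = (p - 1) * (9*p - 11)"
    using pt fL fR by (simp add: card_verts_disj verts_copies verts_lex card_cartesian_product algebra_simps)
qed

theorem theorem7:
  fixes p :: nat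
  assumes "prime p" and "p \<ge> 5"
  shows
   "(\<forall>t. p = 12*t + 1 \<longrightarrow>
      (let G = copies (3*t) (lex_prod (cycle_graph 9) (complete_graph (6*t))) in
        \<not> has_induced_regular_subgraph_of_order G p \<and>
        8 * card (verts G) = 9 * (p - 1)^2)) \<and>
    (\<forall>t. p = 12*t + 5 \<longrightarrow>
      (let G = copies (3*t+1) (lex_prod (cycle_graph 9) (complete_graph (6*t+2))) in
        \<not> has_induced_regular_subgraph_of_order G p \<and>
        8 * card (verts G) = 9 * (p - 1)^2)) \<and>
    (\<forall>t. p = 12*t + 7 \<longrightarrow>
      (let G = disj_union (lex_prod (cycle_graph 5) (complete_graph (6*t+3)))
                 (copies (3*t+1) (lex_prod (cycle_graph 9) (complete_graph (6*t+3)))) in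
        \<not> has_induced_regular_subgraph_of_order G p \<and>
        8 * card (verts G) = (p - 1) * (9*p - 7))) \<and>
    (\<forall>t. p = 12*t + 11 \<longrightarrow>
      (let G = disj_union (lex_prod (cycle_graph 4) (complete_graph (6*t+5)))
                 (copies (3*t+2) (lex_prod (cycle_graph 9) (complete_graph (6*t+5)))) in
        \<not> has_induced_regular_subgraph_of_order G p \<and>
        8 * card (verts G) = (p - 1) * (9*p - 11)))"
  using case_a[OF assms(1)] case_b[OF assms(1)] case_c[OF assms(1)] case_d[OF assms(1)] by blast

end
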